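(* Let $X=\{v_1,\dots,v_n\}$, let $w:X\to\mathbb{R}^+$, and let $g:2^X\to\mathbb{R}^+$ be monotone nondecreasing with $g(\emptyset)=0$. Let $\delta=\min\{g(C\cup\{v\})-g(C): C\subset X, v\in X\setminus C, g(C\cup\{v\})>g(C)\}$. Identify subsets of $X$ with vectors $\mathbf{x}\in\{0,1\}^n$ and define $f_1(\mathbf{x})=\left\lfloor \frac{g(X)-g(\mathbf{x})}{\delta}\right\rfloor\delta$ and $f_2(\mathbf{x})=w(\mathbf{x})=\sum_{x\in\mathbf{x}}w(x)$. Let $\beta=\left\lfloor\frac{g(X)-g(\emptyset)}{\delta}\right\rfloor$. Then throughout the run of GSEMO (as described in the context) on the bi-objective function $(f_1,f_2)$, the population satisfies $|P|\le\beta+1$.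
   Context: Both objectives are to be minimized. $\mathbf{x}'$ weakly dominates $\mathbf{x}$ ($\mathbf{x}'\succeq\mathbf{x}$) if $f_1(\mathbf{x}')\le f_1(\mathbf{x})$ and $f_2(\mathbf{x}')\le f_2(\mathbf{x})$; $\mathbf{x}'$ dominates $\mathbf{x}$ ($\mathbf{x}'\succ\mathbf{x}$) if additionally one of the inequalities is strict. GSEMO: start with population $P=\{\mathbf{0}\}$; in each iteration $t=1,\dots,T$, select $\mathbf{x}\in P$ uniformly at random, generate $\mathbf{x}'$ by flipping each bit of $\mathbf{x}$ independently with probability $1/n$; if no $\mathbf{z}\in P$ satisfies $\mathbf{z}\succ\mathbf{x}'$, set $P\leftarrow (P\setminus\{\mathbf{z}\in P:\mathbf{x}'\succeq\mathbf{z}\})\cup\{\mathbf{x}'\}$. At the end it returns $\arg\min\{f_2(\mathbf{x}):\mathbf{x}\in P, f_1(\mathbf{x})=0\}$ if such an individual exists. *)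

theory Defs
  imports Main Complex_Main
begin

(* Subsets of the ground set X are identified with bit vectors in {0,1}^n, n = card X. *)

definition delta :: "'a set \<Rightarrow> ('a set \<Rightarrow> real) \<Rightarrow> real" where
  "delta X g = Min {g (C \<union> {v}) - g C | C v. C \<subseteq> X \<and> v \<in> X - C \<and> g (C \<union> {v}) > g C}"

definition f1 :: "'a set \<Rightarrow> ('a set \<Rightarrow> real) \<Rightarrow> 'a set \<Rightarrow> real" where
  "f1 X g x = real_of_int \<lfloor>(g X - g x) / delta X g\<rfloor> * delta X g"

definition f2 :: "('a \<Rightarrow> real) \<Rightarrow> 'a set \<Rightarrow> real" where
  "f2 w x = (\<Sum>v\<in>x. w v)"

definition beta :: "'a set \<Rightarrow> ('a set \<Rightarrow> real) \<Rightarrow> int" where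
  "beta X g = \<lfloor>(g X - g {}) / delta X g\<rfloor>"

definition wdom :: "'a set \<Rightarrow> ('a set \<Rightarrow> real) \<Rightarrow> ('a \<Rightarrow> real) \<Rightarrow> 'a set \<Rightarrow> 'a set \<Rightarrow> bool" where
  "wdom X g w x' x \<longleftrightarrow> f1 X g x' \<le> f1 X g x \<and> f2 w x' \<le> f2 w x"

definition dom :: "'a set \<Rightarrow> ('a set \<Rightarrow> real) \<Rightarrow> ('a \<Rightarrow> real) \<Rightarrow> 'a set \<Rightarrow> 'a set \<Rightarrow> bool" where
  "dom X g w x' x \<longleftrightarrow> wdom X g w x' x \<and> (f1 X g x' < f1 X g x \<or> f2 w x' < f2 w x)"

(* Offspring that standard bit mutation (each bit flipped independently with prob. 1/n)
   produces with positive probability: if n = 1 every bit is flipped surely,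
   otherwise every bit string has positive probability. *)
definition offspring :: "'a set \<Rightarrow> 'a set \<Rightarrow> 'a set set" where
  "offspring X x = (if card X = 1 then {X - x} else Pow X)"

inductive gsemo_reachable :: "'a set \<Rightarrow> ('a set \<Rightarrow> real) \<Rightarrow> ('a \<Rightarrow> real) \<Rightarrow> 'a set set \<Rightarrow> bool"
  for X g w where
  init: "gsemo_reachable X g w {{}}"
| reject: "gsemo_reachable X g w P \<Longrightarrow> x \<in> P \<Longrightarrow> x' \<in> offspring X x \<Longrightarrow>
           (\<exists>z\<in>P. dom X g w z x') \<Longrightarrow> gsemo_reachable X g w P"
| accept: "gsemo_reachable X g w P \<Longrightarrow> x \<in> P \<Longrightarrow> x' \<in> offspring X x \<Longrightarrow>
           \<not> (\<exists>z\<in>P. dom X g w z x') \<Longrightarrow>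
           gsemo_reachable X g w ((P - {z \<in> P. wdom X g w x' z}) \<union> {x'})"

end

theory Submission
  imports Defs
begin

lemma inv_reach:
  assumes "gsemo_reachable X g w P"
  shows "P \<subseteq> Pow X \<and> (\<forall>a\<in>P. \<forall>b\<in>P. a \<noteq> b \<longrightarrow> \<not> wdom X g w a b)"
  using assms
proof (induction rule: gsemo_reachable.induct)
  case init
  then show ?case by auto
next
  case (reject P x x')
  then show ?case by auto
next
  case (accept P x x')
  have xX: "x \<subseteq> X" using accept by auto
  have x'X: "x' \<subseteq> X" using accept(3) xX by (auto simp: offspring_def split: if_splits)
  show ?case
  proof
    show "(P - {z \<in> P. wdom X g w x' z}) \<union> {x'} \<subseteq> Pow X" using accept x'X by auto
  next
    show "\<forall>a\<in>(P - {z \<in> P. wdom X g w x' z}) \<union> {x'}. \<forall>b\<in>(P - {z \<in> P. wdom X g w x' z}) \<union> {x'}. a \<noteq> b \<longrightarrow> \<not> wdom X g w a b"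
      using accept(4) accept.IH by (auto simp: wdom_def dom_def)
  qed
qed

lemma strict_step:
  fixes g :: "'a set \<Rightarrow> real"
  assumes "finite D" "x \<union> D \<subseteq> X" "g x < g (x \<union> D)"
  shows "\<exists>C v. C \<subseteq> X \<and> v \<in> X - C \<and> g (C \<union> {v}) > g C"
  using assms
proof (induction D rule: finite_induct)
  case empty
  then show ?case by simp
next
  case (insert d D)
  show ?case
  proof (cases "g (x \<union> D) < g (x \<union> insert d D)")
    case True
    have "d \<notin> x \<union> D"
    proof
      assume "d \<in> x \<union> D"
      then have "x \<union> insert d D = x \<union> D" by auto
      with True show False by simp
    qed
    moreover have "x \<union> insert d D = (x \<union> D) \<union> {d}" by auto
    ultimately show ?thesis using True insert.prems
      by (intro exI[of _ "x \<union> D"] exI[of _ d]) auto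
  next
    case False
    then have "g x < g (x \<union> D)" using insert.prems by linarith
    then show ?thesis using insert.IH insert.prems by auto
  qed
qed

theorem lemma1:
  fixes X :: "'a set" and w :: "'a \<Rightarrow> real" and g :: "'a set \<Rightarrow> real" and P :: "'a set set"
  assumes "finite X"
    and "\<And>v. v \<in> X \<Longrightarrow> w v \<ge> 0"
    and "\<And>A. A \<subseteq> X \<Longrightarrow> g A \<ge> 0"
    and "\<And>A B. A \<subseteq> B \<Longrightarrow> B \<subseteq> X \<Longrightarrow> g A \<le> g B"
    and "g {} = 0"
    and "gsemo_reachable X g w P"
  shows "int (card P) \<le> beta X g + 1"
proof -
  define S where "S = {g (C \<union> {v}) - g C | C v. C \<subseteq> X \<and> v \<in> X - C \<and> g (C \<union> {v}) > g C}"
  have dS: "delta X g = Min S" unfolding S_def delta_def by simp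
  have finS: "finite S"
  proof -
    have "S \<subseteq> (\<lambda>(C,v). g (C \<union> {v}) - g C) ` (Pow X \<times> X)" unfolding S_def by auto
    then show ?thesis using assms(1) finite_subset by blast
  qed
  have Spos: "\<And>s. s \<in> S \<Longrightarrow> s > 0" unfolding S_def by auto
  have dpos: "delta X g > 0" if "x \<subseteq> X" "g x < g X" for x
  proof -
    have "x \<union> (X - x) \<subseteq> X" "g x < g (x \<union> (X - x))" using that by (auto simp: Un_absorb1)
    then obtain C v where "C \<subseteq> X \<and> v \<in> X - C \<and> g (C \<union> {v}) > g C"
      using strict_step[of "X - x" x X g] assms(1) by blast
    then have "S \<noteq> {}" unfolding S_def by blast
    then show ?thesis using dS finS Spos by simp
  qed
  have betapos: "beta X g \<ge> 0"
  proof (cases "g X = 0")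
    case True then show ?thesis by (simp add: beta_def assms(5))
  next
    case False
    then have "g X > 0" using assms(3) by (metis order.refl order_less_le)
    then have "delta X g > 0" using dpos[of "{}"] assms(5) by simp
    then show ?thesis using \<open>g X > 0\<close> by (simp add: beta_def assms(5))
  qed
  have inv: "P \<subseteq> Pow X" "\<forall>a\<in>P. \<forall>b\<in>P. a \<noteq> b \<longrightarrow> \<not> wdom X g w a b"
    using inv_reach[OF assms(6)] by auto
  have inj: "inj_on (f1 X g) P"
  proof (rule inj_onI)
    fix a b assume ab: "a \<in> P" "b \<in> P" "f1 X g a = f1 X g b"
    show "a = b"
    proof (rule ccontr)
      assume "a \<noteq> b"
      then show False using inv(2) ab unfolding wdom_def by (metis linorder_le_cases order_refl)
    qed
  qed
  define T where "T = (\<lambda>k. real_of_int k * delta X g) ` {0..beta X g}"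
  have sub: "f1 X g ` P \<subseteq> T"
  proof
    fix y assume "y \<in> f1 X g ` P"
    then obtain x where x: "x \<in> P" "y = f1 X g x" by auto
    have xX: "x \<subseteq> X" using x inv(1) by auto
    have le: "g x \<le> g X" using assms(4)[OF xX] by simp
    have g0: "g x \<ge> 0" using assms(3)[OF xX] .
    show "y \<in> T"
    proof (cases "g x = g X")
      case True
      then have "y = real_of_int 0 * delta X g" using x by (simp add: f1_def)
      then show ?thesis unfolding T_def using betapos by auto
    next
      case False
      then have d: "delta X g > 0" using dpos[OF xX] le by simp
      have k0: "\<lfloor>(g X - g x) / delta X g\<rfloor> \<ge> 0" using d le by simp
      have "(g X - g x) / delta X g \<le> (g X - g {}) / delta X g"
        using d g0 assms(5) by (simp add: divide_right_mono)
      then have k1: "\<lfloor>(g X - g x) / delta X g\<rfloor> \<le> beta X g"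
        unfolding beta_def by (rule floor_mono)
      show ?thesis unfolding T_def x(2) f1_def using k0 k1 by auto
    qed
  qed
  have "card P = card (f1 X g ` P)" using inj by (simp add: card_image)
  also have "\<dots> \<le> card T"
    by (rule card_mono[OF _ sub]) (simp add: T_def)
  also have "\<dots> \<le> card {0..beta X g}" unfolding T_def by (rule card_image_le) simp
  finally have "card P \<le> nat (beta X g + 1)" by simp
  then show ?thesis using betapos by linarith
qed

end
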